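(* Let $S$ be an ordered forest and $I$ a finite linear order. Then $S\otimes I$ with the relation $\sqsubseteq_{S\otimes I}$ is a forest, and, taken additionally with the linear order $\leq_{S\otimes I}$, it is an ordered forest.
   Context: A forest is a finite poset in which the set of predecessors of each element is linearly ordered (each element its own predecessor); $1\oplus T$ denotes the tree obtained by adding a new smallest element. An ordered tree has a linear order on the immediate successors of each node, inducing the lexicographic order ($v\leq w$ if $v\sqsubseteq w$; for incomparable $v,w$ compare the immediate successors of $v\wedge w$ below $v$ and $w$). An ordered forest is a forest $T$ with a linear order $\leq_T$ that is the restriction of the lexicographic order of some ordered-tree structure on $1\oplus T$. For $s$ in a forest $S$, ${\rm ht}(s)$ is the number of predecessors of $s$ (including $s$), ${\rm ht}(S)=\max_s{\rm ht}(s)$, and for $i<{\rm ht}(s)$, $s(i)$ is the predecessor of $s$ of height $i+1$. Let $n={\rm ht}(S)$ and $S\otimes I=\{(s,t)\in S\times I^{\leq n}\mid {\rm ht}(s)=|t|\}$, where $I^{\le n}$ are sequences $t=(t(0),\dots,t(|t|-1))$ in $I$ of length at most $n$. Set $(s_1,t_1)\sqsubseteq_{S\otimes I}(s_2,t_2)$ iff $s_1\sqsubseteq_S s_2$, $t_1\upharpoonright({\rm ht}(s_1)-1)=t_2\upharpoonright({\rm ht}(s_1)-1)$, and $t_1({\rm ht}(s_1)-1)\leq_I t_2({\rm ht}(s_1)-1)$. Set $(s_1,t_1)\leq_{S\otimes I}(s_2,t_2)$ iff the sequence $(s_1(0),t_1(0),\dots,s_1(h_1-1),t_1(h_1-1))$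 is lexicographically at most $(s_2(0),t_2(0),\dots,s_2(h_2-1),t_2(h_2-1))$, where $h_k={\rm ht}(s_k)$ and lexicographic comparison uses $\leq_S$ and $\leq_I$. *)

theory Defs
  imports Main
begin

definition porder_on :: "'a set \<Rightarrow> ('a \<Rightarrow> 'a \<Rightarrow> bool) \<Rightarrow> bool" where
  "porder_on A r \<longleftrightarrow>
     (\<forall>x\<in>A. r x x) \<and>
     (\<forall>x\<in>A. \<forall>y\<in>A. r x y \<and> r y x \<longrightarrow> x = y) \<and>
     (\<forall>x\<in>A. \<forall>y\<in>A. \<forall>z\<in>A. r x y \<and> r y z \<longrightarrow> r x z)"

definition lorder_on :: "'a set \<Rightarrow> ('a \<Rightarrow> 'a \<Rightarrow> bool) \<Rightarrow> bool" where
  "lorder_on A r \<longleftrightarrow> porder_on A r \<and> (\<forall>x\<in>A. \<forall>y\<in>A. r x y \<or> r y x)"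

definition forest :: "'a set \<Rightarrow> ('a \<Rightarrow> 'a \<Rightarrow> bool) \<Rightarrow> bool" where
  "forest S le \<longleftrightarrow> finite S \<and> porder_on S le \<and>
     (\<forall>s\<in>S. \<forall>x\<in>S. \<forall>y\<in>S. le x s \<and> le y s \<longrightarrow> le x y \<or> le y x)"

definition tree :: "'a set \<Rightarrow> ('a \<Rightarrow> 'a \<Rightarrow> bool) \<Rightarrow> bool" where
  "tree T le \<longleftrightarrow> forest T le \<and> (\<exists>r\<in>T. \<forall>x\<in>T. le r x)"

definition imm_succ :: "'a set \<Rightarrow> ('a \<Rightarrow> 'a \<Rightarrow> bool) \<Rightarrow> 'a \<Rightarrow> 'a \<Rightarrow> bool" where
  "imm_succ T le v w \<longleftrightarrow> v \<in> T \<and> w \<in> T \<and> le v w \<and> v \<noteq> w \<and>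
     (\<forall>u\<in>T. le v u \<and> le u w \<longrightarrow> u = v \<or> u = w)"

definition ordered_tree :: "'a set \<Rightarrow> ('a \<Rightarrow> 'a \<Rightarrow> bool) \<Rightarrow> ('a \<Rightarrow> 'a \<Rightarrow> 'a \<Rightarrow> bool) \<Rightarrow> bool" where
  "ordered_tree T le ord \<longleftrightarrow> tree T le \<and>
     (\<forall>v\<in>T. lorder_on {w. imm_succ T le v w} (ord v))"

definition is_meet :: "'a set \<Rightarrow> ('a \<Rightarrow> 'a \<Rightarrow> bool) \<Rightarrow> 'a \<Rightarrow> 'a \<Rightarrow> 'a \<Rightarrow> bool" where
  "is_meet T le m v w \<longleftrightarrow> m \<in> T \<and> le m v \<and> le m w \<and>
     (\<forall>u\<in>T. le u v \<and> le u w \<longrightarrow> le u m)"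

definition tree_lex :: "'a set \<Rightarrow> ('a \<Rightarrow> 'a \<Rightarrow> bool) \<Rightarrow> ('a \<Rightarrow> 'a \<Rightarrow> 'a \<Rightarrow> bool)
    \<Rightarrow> 'a \<Rightarrow> 'a \<Rightarrow> bool" where
  "tree_lex T le ord v w \<longleftrightarrow> le v w \<or>
     (\<not> le v w \<and> \<not> le w v \<and>
      (\<exists>m. is_meet T le m v w \<and>
         (\<exists>v' w'. imm_succ T le m v' \<and> le v' v \<and> imm_succ T le m w' \<and> le w' w
                 \<and> ord m v' w')))"

definition oplus_carrier :: "'a set \<Rightarrow> 'a option set" where
  "oplus_carrier S = insert None (Some ` S)"

definition oplus_le :: "('a \<Rightarrow> 'a \<Rightarrow> bool) \<Rightarrow> 'a option \<Rightarrow> 'a option \<Rightarrow> bool" where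
  "oplus_le le x y = (case x of None \<Rightarrow> True
                       | Some a \<Rightarrow> (case y of None \<Rightarrow> False | Some b \<Rightarrow> le a b))"

definition ordered_forest :: "'a set \<Rightarrow> ('a \<Rightarrow> 'a \<Rightarrow> bool) \<Rightarrow> ('a \<Rightarrow> 'a \<Rightarrow> bool) \<Rightarrow> bool" where
  "ordered_forest S le lo \<longleftrightarrow> forest S le \<and> lorder_on S lo \<and>
     (\<exists>ord. ordered_tree (oplus_carrier S) (oplus_le le) ord \<and>
        (\<forall>x\<in>S. \<forall>y\<in>S. lo x y \<longleftrightarrow>
            tree_lex (oplus_carrier S) (oplus_le le) ord (Some x) (Some y)))"

definition ht :: "'a set \<Rightarrow> ('a \<Rightarrow> 'a \<Rightarrow> bool) \<Rightarrow> 'a \<Rightarrow> nat" where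
  "ht S le s = card {x\<in>S. le x s}"

definition forest_ht :: "'a set \<Rightarrow> ('a \<Rightarrow> 'a \<Rightarrow> bool) \<Rightarrow> nat" where
  "forest_ht S le = Max (ht S le ` S)"

definition pred_at :: "'a set \<Rightarrow> ('a \<Rightarrow> 'a \<Rightarrow> bool) \<Rightarrow> 'a \<Rightarrow> nat \<Rightarrow> 'a" where
  "pred_at S le s i = (THE x. x \<in> S \<and> le x s \<and> ht S le x = Suc i)"

definition tensor :: "'a set \<Rightarrow> ('a \<Rightarrow> 'a \<Rightarrow> bool) \<Rightarrow> 'i set \<Rightarrow> ('a \<times> 'i list) set" where
  "tensor S le I = {(s, t). s \<in> S \<and> set t \<subseteq> I \<and> length t \<le> forest_ht S le
                            \<and> length t = ht S le s}"

definition tensor_le :: "'a set \<Rightarrow> ('a \<Rightarrow> 'a \<Rightarrow> bool) \<Rightarrow> ('i \<Rightarrow> 'i \<Rightarrow> bool)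
    \<Rightarrow> 'a \<times> 'i list \<Rightarrow> 'a \<times> 'i list \<Rightarrow> bool" where
  "tensor_le S le leI p q = (case p of (s1, t1) \<Rightarrow> case q of (s2, t2) \<Rightarrow>
     le s1 s2 \<and> take (ht S le s1 - 1) t1 = take (ht S le s1 - 1) t2 \<and>
     leI (t1 ! (ht S le s1 - 1)) (t2 ! (ht S le s1 - 1)))"

definition list_lex_le :: "('b \<Rightarrow> 'b \<Rightarrow> bool) \<Rightarrow> 'b list \<Rightarrow> 'b list \<Rightarrow> bool" where
  "list_lex_le r xs ys \<longleftrightarrow> (\<exists>zs. ys = xs @ zs) \<or>
     (\<exists>p a b xs' ys'. xs = p @ a # xs' \<and> ys = p @ b # ys' \<and> r a b \<and> a \<noteq> b)"

definition interleave :: "'a set \<Rightarrow> ('a \<Rightarrow> 'a \<Rightarrow> bool) \<Rightarrow> 'a \<times> 'i list \<Rightarrow> ('a + 'i) list" where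
  "interleave S le p = (case p of (s, t) \<Rightarrow>
     concat (map (\<lambda>i. [Inl (pred_at S le s i), Inr (t ! i)]) [0..<ht S le s]))"

definition sum_le :: "('a \<Rightarrow> 'a \<Rightarrow> bool) \<Rightarrow> ('i \<Rightarrow> 'i \<Rightarrow> bool) \<Rightarrow> 'a + 'i \<Rightarrow> 'a + 'i \<Rightarrow> bool" where
  "sum_le lo leI x y = (case x of
       Inl a \<Rightarrow> (case y of Inl b \<Rightarrow> lo a b | Inr _ \<Rightarrow> False)
     | Inr a \<Rightarrow> (case y of Inl _ \<Rightarrow> False | Inr b \<Rightarrow> leI a b))"

definition tensor_lo :: "'a set \<Rightarrow> ('a \<Rightarrow> 'a \<Rightarrow> bool) \<Rightarrow> ('a \<Rightarrow> 'a \<Rightarrow> bool) \<Rightarrow> ('i \<Rightarrow> 'i \<Rightarrow> bool)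
    \<Rightarrow> 'a \<times> 'i list \<Rightarrow> 'a \<times> 'i list \<Rightarrow> bool" where
  "tensor_lo S le lo leI p q =
     list_lex_le (sum_le lo leI) (interleave S le p) (interleave S le q)"

end

theory Submission
  imports Defs
begin

definition LL :: "('b \<Rightarrow> 'b \<Rightarrow> bool) \<Rightarrow> 'b list \<Rightarrow> 'b list \<Rightarrow> bool" where
  "LL r xs ys \<longleftrightarrow> (length xs \<le> length ys \<and> (\<forall>j<length xs. xs!j = ys!j)) \<or>
     (\<exists>k. k < length xs \<and> k < length ys \<and> (\<forall>j<k. xs!j = ys!j) \<and> xs!k \<noteq> ys!k \<and> r (xs!k) (ys!k))"

lemma list_lex_le_LL: "list_lex_le r xs ys = LL r xs ys"
proof
  assume H: "list_lex_le r xs ys"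
  show "LL r xs ys"
  proof (cases "\<exists>zs. ys = xs @ zs")
    case True then obtain zs where "ys = xs @ zs" by blast
    then show ?thesis unfolding LL_def by (intro disjI1) (auto simp: nth_append)
  next
    case False
    then obtain p a b xs' ys' where h: "xs = p @ a # xs'" "ys = p @ b # ys'" "r a b" "a \<noteq> b"
      using H unfolding list_lex_le_def by blast
    show ?thesis
      unfolding LL_def apply (rule disjI2, rule exI[of _ "length p"]) using h by (auto simp: nth_append)
  qed
next
  assume H: "LL r xs ys"
  from H[unfolded LL_def] show "list_lex_le r xs ys"
  proof (elim disjE exE conjE)
    assume h: "length xs \<le> length ys" "\<forall>j<length xs. xs ! j = ys ! j"
    have "take (length xs) ys = xs" by (rule nth_equalityI) (use h in auto)
    then have "ys = xs @ drop (length xs) ys" by (metis append_take_drop_id)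
    then show ?thesis unfolding list_lex_le_def by blast
  next
    fix k assume h: "k < length xs" "k < length ys" "\<forall>j<k. xs ! j = ys ! j" "xs ! k \<noteq> ys ! k" "r (xs ! k) (ys ! k)"
    have tk: "take k xs = take k ys" by (rule nth_equalityI) (use h in auto)
    have "xs = take k xs @ xs!k # drop (Suc k) xs" using h by (simp add: id_take_nth_drop)
    moreover have "ys = take k xs @ ys!k # drop (Suc k) ys" using h tk by (simp add: id_take_nth_drop)
    ultimately show ?thesis using h unfolding list_lex_le_def by blast
  qed
qed

lemma LL_refl: "LL r xs xs" unfolding LL_def by auto

lemma LL_antisym:
  assumes A: "porder_on A r" "set xs \<subseteq> A" "set ys \<subseteq> A" and h: "LL r xs ys" "LL r ys xs"
  shows "xs = ys"
proof -
  have ant: "\<And>a b. a \<in> A \<Longrightarrow> b \<in> A \<Longrightarrow> r a b \<Longrightarrow> r b a \<Longrightarrow> a = b" using A(1) unfolding porder_on_def by blast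
  show ?thesis using h[unfolded LL_def]
  proof (elim disjE exE conjE)
    assume "length xs \<le> length ys" "\<forall>j<length xs. xs ! j = ys ! j" "length ys \<le> length xs"
    then show ?thesis by (intro nth_equalityI) auto
  next
    fix k assume "length xs \<le> length ys" "\<forall>j<length xs. xs ! j = ys ! j" "k < length ys" "k < length xs" "ys ! k \<noteq> xs ! k"
    then show ?thesis by auto
  next
    fix k assume "k < length xs" "k < length ys" "xs ! k \<noteq> ys ! k" "length ys \<le> length xs" "\<forall>j<length ys. ys ! j = xs ! j"
    then show ?thesis by auto
  next
    fix k k' assume h1: "k < length xs" "k < length ys" "\<forall>j<k. xs ! j = ys ! j" "xs ! k \<noteq> ys ! k" "r (xs ! k) (ys ! k)"
      and h2: "k' < length ys" "k' < length xs" "\<forall>j<k'. ys ! j = xs ! j" "ys ! k' \<noteq> xs ! k'" "r (ys ! k') (xs ! k')"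
    have "k = k'" using h1 h2 by (metis linorder_neqE_nat)
    then have "xs!k = ys!k" using h1 h2 ant[of "xs!k" "ys!k"] A nth_mem by (metis subsetD)
    then show ?thesis using h1 by simp
  qed
qed

lemma LL_trans:
  assumes A: "porder_on A r" "set xs \<subseteq> A" "set ys \<subseteq> A" "set zs \<subseteq> A" and h: "LL r xs ys" "LL r ys zs"
  shows "LL r xs zs"
proof -
  have ant: "\<And>a b. a \<in> A \<Longrightarrow> b \<in> A \<Longrightarrow> r a b \<Longrightarrow> r b a \<Longrightarrow> a = b" using A(1) unfolding porder_on_def by blast
  have tr: "\<And>a b c. a \<in> A \<Longrightarrow> b \<in> A \<Longrightarrow> c \<in> A \<Longrightarrow> r a b \<Longrightarrow> r b c \<Longrightarrow> r a c" using A(1) unfolding porder_on_def by blast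
  show ?thesis using h[unfolded LL_def]
  proof (elim disjE exE conjE)
    assume "length xs \<le> length ys" "\<forall>j<length xs. xs ! j = ys ! j" "length ys \<le> length zs" "\<forall>j<length ys. ys ! j = zs ! j"
    then show ?thesis unfolding LL_def by (intro disjI1) auto
  next
    fix k assume p: "length xs \<le> length ys" "\<forall>j<length xs. xs ! j = ys ! j"
      and d: "k < length ys" "k < length zs" "\<forall>j<k. ys ! j = zs ! j" "ys ! k \<noteq> zs ! k" "r (ys ! k) (zs ! k)"
    show ?thesis
    proof (cases "k < length xs")
      case True then show ?thesis using p d unfolding LL_def by (intro disjI2 exI[of _ k]) auto
    next
      case False then show ?thesis using p d unfolding LL_def by (intro disjI1) auto
    qed
  next
    fix k assume d: "k < length xs" "k < length ys" "\<forall>j<k. xs ! j = ys ! j" "xs ! k \<noteq> ys ! k" "r (xs ! k) (ys ! k)"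
      and p: "length ys \<le> length zs" "\<forall>j<length ys. ys ! j = zs ! j"
    show ?thesis using p d unfolding LL_def by (intro disjI2 exI[of _ k]) auto
  next
    fix k k' assume h1: "k < length xs" "k < length ys" "\<forall>j<k. xs ! j = ys ! j" "xs ! k \<noteq> ys ! k" "r (xs ! k) (ys ! k)"
      and h2: "k' < length ys" "k' < length zs" "\<forall>j<k'. ys ! j = zs ! j" "ys ! k' \<noteq> zs ! k'" "r (ys ! k') (zs ! k')"
    consider "k < k'" | "k' < k" | "k = k'" by linarith
    then show ?thesis
    proof cases
      case 1 then show ?thesis using h1 h2 unfolding LL_def by (intro disjI2 exI[of _ k]) auto
    next
      case 2 then show ?thesis using h1 h2 unfolding LL_def by (intro disjI2 exI[of _ k']) auto
    next
      case 3
      have m: "xs!k \<in> A" "ys!k \<in> A" "zs!k \<in> A" using A h1 h2 3 nth_mem by (metis subsetD)+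
      have "r (xs!k) (zs!k)" using tr[OF m] h1 h2 3 by simp
      moreover have "xs!k \<noteq> zs!k" using ant[of "xs!k" "ys!k"] m h1 h2 3 by auto
      ultimately show ?thesis using h1 h2 3 unfolding LL_def by (intro disjI2 exI[of _ k]) auto
    qed
  qed
qed

definition tot :: "('b \<Rightarrow> 'b \<Rightarrow> bool) \<Rightarrow> 'b list \<Rightarrow> 'b list \<Rightarrow> bool" where
  "tot r xs ys \<longleftrightarrow> (\<forall>j. j < length xs \<longrightarrow> j < length ys \<longrightarrow> r (xs!j) (ys!j) \<or> r (ys!j) (xs!j))"

lemma LL_total:
  assumes T: "tot r xs ys"
  shows "LL r xs ys \<or> LL r ys xs"
proof (cases "\<forall>j<min (length xs) (length ys). xs!j = ys!j")
  case True then show ?thesis unfolding LL_def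
    by (metis min.absorb1 min.absorb2 nle_le)
next
  case False
  then obtain k0 where "k0 < min (length xs) (length ys) \<and> xs!k0 \<noteq> ys!k0" by auto
  define k where "k = (LEAST k. k < min (length xs) (length ys) \<and> xs!k \<noteq> ys!k)"
  have k: "k < min (length xs) (length ys) \<and> xs!k \<noteq> ys!k"
    unfolding k_def by (rule LeastI) fact
  have bel: "\<forall>j<k. xs!j = ys!j"
  proof (intro allI impI)
    fix j assume "j < k"
    then have "\<not> (j < min (length xs) (length ys) \<and> xs!j \<noteq> ys!j)" unfolding k_def using not_less_Least by blast
    then show "xs!j = ys!j" using \<open>j < k\<close> k by auto
  qed
  have "r (xs!k) (ys!k) \<or> r (ys!k) (xs!k)" using T k unfolding tot_def by auto
  then show ?thesis unfolding LL_def using k bel by (metis min_less_iff_conj)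
qed

locale fs =
  fixes S :: "'a set" and le :: "'a \<Rightarrow> 'a \<Rightarrow> bool"
  assumes forS: "forest S le"
begin

lemma finS: "finite S" using forS unfolding forest_def by blast
lemma frefl: "x \<in> S \<Longrightarrow> le x x" using forS unfolding forest_def porder_on_def by blast
lemma fantisym: "x \<in> S \<Longrightarrow> y \<in> S \<Longrightarrow> le x y \<Longrightarrow> le y x \<Longrightarrow> x = y"
  using forS unfolding forest_def porder_on_def by blast
lemma ftrans: "x \<in> S \<Longrightarrow> y \<in> S \<Longrightarrow> z \<in> S \<Longrightarrow> le x y \<Longrightarrow> le y z \<Longrightarrow> le x z"
  using forS unfolding forest_def porder_on_def by blast
lemma chain: "s \<in> S \<Longrightarrow> x \<in> S \<Longrightarrow> y \<in> S \<Longrightarrow> le x s \<Longrightarrow> le y s \<Longrightarrow> le x y \<or> le y x"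
  using forS unfolding forest_def by blast

lemma ht_pos: "s \<in> S \<Longrightarrow> ht S le s \<ge> 1"
proof -
  assume "s \<in> S"
  then have "s \<in> {x\<in>S. le x s}" using frefl by auto
  moreover have "finite {x\<in>S. le x s}" using finS by auto
  ultimately have "card {x\<in>S. le x s} > 0" by (simp add: card_gt_0_iff) blast
  then show ?thesis unfolding ht_def by simp
qed

lemma ht_mono: "x \<in> S \<Longrightarrow> s \<in> S \<Longrightarrow> le x s \<Longrightarrow> ht S le x \<le> ht S le s"
  unfolding ht_def using finS by (intro card_mono) (auto dest: ftrans[of _ x s])

lemma ht_less: assumes "x \<in> S" "s \<in> S" "le x s" "x \<noteq> s" shows "ht S le x < ht S le s"
  unfolding ht_def
proof (rule psubset_card_mono)
  show "finite {y \<in> S. le y s}" using finS by auto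
  have "s \<notin> {y \<in> S. le y x}" using assms fantisym by auto
  moreover have "s \<in> {y \<in> S. le y s}" using assms frefl by auto
  moreover have "{y \<in> S. le y x} \<subseteq> {y \<in> S. le y s}" using assms by (auto dest: ftrans[of _ x s])
  ultimately show "{y \<in> S. le y x} \<subset> {y \<in> S. le y s}" by blast
qed

lemma ht_eq: "x \<in> S \<Longrightarrow> s \<in> S \<Longrightarrow> le x s \<Longrightarrow> ht S le x = ht S le s \<Longrightarrow> x = s"
  using ht_less[of x s] by (cases "x = s") auto

lemma pred_uniq: "s \<in> S \<Longrightarrow> x \<in> S \<Longrightarrow> y \<in> S \<Longrightarrow> le x s \<Longrightarrow> le y s \<Longrightarrow> ht S le x = ht S le y \<Longrightarrow> x = y"
proof -
  assume a: "s \<in> S" "x \<in> S" "y \<in> S" "le x s" "le y s" "ht S le x = ht S le y"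
  from chain[OF a(1-5)] show "x = y"
  proof
    assume "le x y" then show ?thesis using ht_eq[of x y] a by simp
  next
    assume "le y x" then have "y = x" using ht_eq[of y x] a by simp
    then show ?thesis by simp
  qed
qed

lemma pred_ex: assumes "s \<in> S" "i < ht S le s" shows "\<exists>x. x \<in> S \<and> le x s \<and> ht S le x = Suc i"
proof -
  let ?P = "{x\<in>S. le x s}"
  have fin: "finite ?P" using finS by auto
  have inj: "inj_on (ht S le) ?P"
  proof (rule inj_onI)
    fix x y assume "x \<in> ?P" "y \<in> ?P" "ht S le x = ht S le y"
    then show "x = y" using pred_uniq[OF assms(1), of x y] by blast
  qed
  have sub: "ht S le ` ?P \<subseteq> {1..ht S le s}" using ht_pos ht_mono assms(1) by auto
  have "card (ht S le ` ?P) = ht S le s" using card_image[OF inj] unfolding ht_def by simp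
  then have "ht S le ` ?P = {1..ht S le s}" using sub by (intro card_subset_eq) auto
  moreover have "Suc i \<in> {1..ht S le s}" using assms by auto
  ultimately have "Suc i \<in> ht S le ` ?P" by simp
  then show ?thesis by auto
qed

lemma pred_ex1: "s \<in> S \<Longrightarrow> i < ht S le s \<Longrightarrow> \<exists>!x. x \<in> S \<and> le x s \<and> ht S le x = Suc i"
proof -
  assume a: "s \<in> S" "i < ht S le s"
  obtain x where x: "x \<in> S \<and> le x s \<and> ht S le x = Suc i" using pred_ex[OF a] by blast
  show ?thesis
  proof (rule ex1I[of _ x])
    show "x \<in> S \<and> le x s \<and> ht S le x = Suc i" by fact
  next
    fix y assume "y \<in> S \<and> le y s \<and> ht S le y = Suc i"
    then show "y = x" using pred_uniq[OF a(1), of y x] x by simp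
  qed
qed

lemma pred_at: assumes "s \<in> S" "i < ht S le s"
  shows "pred_at S le s i \<in> S" "le (pred_at S le s i) s" "ht S le (pred_at S le s i) = Suc i"
  using theI'[OF pred_ex1[OF assms]] unfolding pred_at_def by auto

lemma pred_at_eqI: "s \<in> S \<Longrightarrow> i < ht S le s \<Longrightarrow> x \<in> S \<Longrightarrow> le x s \<Longrightarrow> ht S le x = Suc i \<Longrightarrow> pred_at S le s i = x"
  by (rule pred_uniq[of s]) (use pred_at in auto)

lemma pred_at_last: "s \<in> S \<Longrightarrow> pred_at S le s (ht S le s - 1) = s"
proof -
  assume a: "s \<in> S"
  have "ht S le s \<ge> 1" using ht_pos a .
  then show ?thesis using pred_at_eqI[of s "ht S le s - 1" s] frefl[OF a] a by simp
qed

lemma pred_at_mono: "x \<in> S \<Longrightarrow> s \<in> S \<Longrightarrow> le x s \<Longrightarrow> i < ht S le x \<Longrightarrow> pred_at S le x i = pred_at S le s i"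
proof -
  assume a: "x \<in> S" "s \<in> S" "le x s" "i < ht S le x"
  have "ht S le x \<le> ht S le s" using a ht_mono by blast
  then have i: "i < ht S le s" using a(4) by linarith
  have p: "pred_at S le x i \<in> S" "le (pred_at S le x i) x" "ht S le (pred_at S le x i) = Suc i"
    using pred_at[OF a(1,4)] by auto
  have "le (pred_at S le x i) s" using ftrans[OF p(1) a(1) a(2) p(2) a(3)] .
  then have "pred_at S le s i = pred_at S le x i" using pred_at_eqI[OF a(2) i p(1) _ p(3)] by blast
  then show ?thesis by simp
qed

lemma pred_le: assumes "s \<in> S" "s' \<in> S" "ht S le s \<le> ht S le s'"
  "\<forall>i<ht S le s. pred_at S le s i = pred_at S le s' i" shows "le s s'"
proof -
  have "ht S le s - 1 < ht S le s" "ht S le s - 1 < ht S le s'" using ht_pos assms by force+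
  have "s = pred_at S le s' (ht S le s - 1)" using pred_at_last[OF assms(1)] assms(4) \<open>ht S le s - 1 < ht S le s\<close> by simp
  then show ?thesis using pred_at(2)[OF assms(2) \<open>ht S le s - 1 < ht S le s'\<close>] by simp
qed

end

definition PRE :: "('b \<Rightarrow> 'b \<Rightarrow> bool) \<Rightarrow> 'b list \<Rightarrow> 'b list \<Rightarrow> bool" where
  "PRE r xs ys \<longleftrightarrow> xs \<noteq> [] \<and> length xs \<le> length ys \<and> (\<forall>j<length xs - 1. xs!j = ys!j) \<and>
     r (xs!(length xs - 1)) (ys!(length xs - 1))"

lemma porderD:
  assumes "porder_on A r"
  shows "\<And>a. a \<in> A \<Longrightarrow> r a a"
    and "\<And>a b. a \<in> A \<Longrightarrow> b \<in> A \<Longrightarrow> r a b \<Longrightarrow> r b a \<Longrightarrow> a = b"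
    and "\<And>a b c. a \<in> A \<Longrightarrow> b \<in> A \<Longrightarrow> c \<in> A \<Longrightarrow> r a b \<Longrightarrow> r b c \<Longrightarrow> r a c"
  using assms unfolding porder_on_def by blast+

lemma inA: "set xs \<subseteq> A \<Longrightarrow> j < length xs \<Longrightarrow> xs!j \<in> A"
  by (meson nth_mem subsetD)

lemma PRE_refl: "porder_on A r \<Longrightarrow> set xs \<subseteq> A \<Longrightarrow> xs \<noteq> [] \<Longrightarrow> PRE r xs xs"
proof -
  assume a: "porder_on A r" "set xs \<subseteq> A" "xs \<noteq> []"
  then have "length xs - 1 < length xs" by simp
  then have "xs!(length xs - 1) \<in> A" using inA a(2) by blast
  then show ?thesis using porderD(1)[OF a(1)] a(3) unfolding PRE_def by simp
qed

lemma PRE_antisym: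
  assumes A: "porder_on A r" "set xs \<subseteq> A" "set ys \<subseteq> A" and h: "PRE r xs ys" "PRE r ys xs"
  shows "xs = ys"
proof -
  have len: "length xs = length ys" using h unfolding PRE_def by simp
  have ne: "length xs > 0" using h unfolding PRE_def by simp
  show ?thesis
  proof (rule nth_equalityI)
    show "length xs = length ys" by fact
    fix j assume j: "j < length xs"
    show "xs!j = ys!j"
    proof (cases "j < length xs - 1")
      case True then show ?thesis using h unfolding PRE_def by simp
    next
      case False then have "j = length xs - 1" using j by simp
      then show ?thesis using h len porderD(2)[OF A(1) inA[OF A(2) j] inA[OF A(3)]] j unfolding PRE_def by simp
    qed
  qed
qed

lemma PRE_trans:
  assumes A: "porder_on A r" "set xs \<subseteq> A" "set ys \<subseteq> A" "set zs \<subseteq> A" and h: "PRE r xs ys" "PRE r ys zs"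
  shows "PRE r xs zs"
proof -
  let ?k = "length xs - 1"
  have l: "xs \<noteq> []" "length xs \<le> length ys" "length ys \<le> length zs" "ys \<noteq> []" using h unfolding PRE_def by auto
  have a1: "\<forall>j<?k. xs!j = ys!j" "r (xs!?k) (ys!?k)" using h(1) unfolding PRE_def by auto
  have a2: "\<forall>j<length ys - 1. ys!j = zs!j" "r (ys!(length ys - 1)) (zs!(length ys - 1))" using h(2) unfolding PRE_def by auto
  have ag: "\<forall>j<?k. xs!j = zs!j" using a1 a2 l by auto
  have "r (xs!?k) (zs!?k)"
  proof (cases "?k < length ys - 1")
    case True then show ?thesis using a1 a2 by simp
  next
    case False then have e: "?k = length ys - 1" using l by simp
    have m: "xs!?k \<in> A" "ys!?k \<in> A" "zs!?k \<in> A" using l A inA by (metis diff_less length_greater_0_conv zero_less_one order_less_le_trans)+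
    show ?thesis using porderD(3)[OF A(1) m] a1 a2 e by simp
  qed
  then show ?thesis using ag l unfolding PRE_def by simp
qed

lemma PRE_chain:
  assumes A: "tot r xs ys" and h: "PRE r xs zs" "PRE r ys zs"
  shows "PRE r xs ys \<or> PRE r ys xs"
proof -
  have gen: "PRE r xs ys \<or> PRE r ys xs" if L: "length xs \<le> length ys" and h: "PRE r xs zs" "PRE r ys zs"
    and A: "tot r xs ys" for xs ys zs
  proof -
    let ?k = "length xs - 1"
    have l: "xs \<noteq> []" "ys \<noteq> []" "length ys \<le> length zs" using h unfolding PRE_def by auto
    have a1: "\<forall>j<?k. xs!j = zs!j" "r (xs!?k) (zs!?k)" using h(1) unfolding PRE_def by auto
    have a2: "\<forall>j<length ys - 1. ys!j = zs!j" "r (ys!(length ys - 1)) (zs!(length ys - 1))" using h(2) unfolding PRE_def by auto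
    have ag: "\<forall>j<?k. xs!j = ys!j" using a1 a2 L by auto
    show ?thesis
    proof (cases "?k < length ys - 1")
      case True then have "r (xs!?k) (ys!?k)" using a1 a2 by simp
      then show ?thesis using ag l L unfolding PRE_def by simp
    next
      case False then have e: "?k = length ys - 1" using l L by simp
      then have e2: "length xs = length ys" using l L by (metis One_nat_def Suc_pred length_greater_0_conv)
      have "?k < length xs" "?k < length ys" using l L by (simp_all add: e2)
      then have "r (xs!?k) (ys!?k) \<or> r (ys!?k) (xs!?k)" using A unfolding tot_def by blast
      then show ?thesis
      proof
        assume "r (xs!?k) (ys!?k)" then show ?thesis using ag l L unfolding PRE_def by simp
      next
        assume "r (ys!?k) (xs!?k)" then show ?thesis using ag l e2 unfolding PRE_def by simp
      qed
    qed
  qed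
  show ?thesis
  proof (cases "length xs \<le> length ys")
    case True then show ?thesis using gen[OF True h A] by simp
  next
    case False
    have "tot r ys xs" using A unfolding tot_def by blast
    then show ?thesis using gen[of ys xs zs] h False by linarith
  qed
qed

lemma PRE_LL: "PRE r xs ys \<Longrightarrow> LL r xs ys"
proof -
  assume h: "PRE r xs ys"
  let ?k = "length xs - 1"
  have l: "xs \<noteq> []" "length xs \<le> length ys" using h unfolding PRE_def by auto
  show ?thesis
  proof (cases "xs!?k = ys!?k")
    case True
    have "\<forall>j<length xs. xs!j = ys!j"
    proof (intro allI impI)
      fix j assume "j < length xs"
      show "xs!j = ys!j"
      proof (cases "j < ?k")
        case True then show ?thesis using h unfolding PRE_def by simp
      next
        case False then have "j = ?k" using \<open>j < length xs\<close> by simp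
        then show ?thesis using \<open>xs!?k = ys!?k\<close> by simp
      qed
    qed
    then show ?thesis using l unfolding LL_def by simp
  next
    case False
    have "length xs > 0" using l by simp
    then have "?k < length ys" "?k < length xs" using l by linarith+
    then show ?thesis unfolding LL_def using h False l unfolding PRE_def
      by (intro disjI2 exI[of _ ?k]) auto
  qed
qed

lemma PRE_block:
  assumes A: "porder_on A r" "set xs \<subseteq> A" "set ys \<subseteq> A" "set xs' \<subseteq> A" "set ys' \<subseteq> A"
    and h: "PRE r xs' xs" "PRE r ys' ys" "\<not> PRE r xs' ys'" "\<not> PRE r ys' xs'" "LL r xs' ys'"
  shows "LL r xs ys"
proof -
  let ?a = "length xs' - 1" and ?b = "length ys' - 1"
  have l: "xs' \<noteq> []" "ys' \<noteq> []" "length xs' \<le> length xs" "length ys' \<le> length ys" using h unfolding PRE_def by auto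
  have ax: "\<forall>j<?a. xs'!j = xs!j" "r (xs'!?a) (xs!?a)" using h(1) unfolding PRE_def by auto
  have ay: "\<forall>j<?b. ys'!j = ys!j" "r (ys'!?b) (ys!?b)" using h(2) unfolding PRE_def by auto
  have np: "\<not> (length xs' \<le> length ys' \<and> (\<forall>j<length xs'. xs'!j = ys'!j))"
  proof
    assume p: "length xs' \<le> length ys' \<and> (\<forall>j<length xs'. xs'!j = ys'!j)"
    have "?a < length xs'" using l by simp
    then have "xs'!?a \<in> A" using inA A by blast
    then have "r (xs'!?a) (ys'!?a)" using p porderD(1)[OF A(1)] \<open>?a < length xs'\<close> by metis
    then have "PRE r xs' ys'" using p l unfolding PRE_def by simp
    then show False using h by simp
  qed
  then obtain k where k: "k < length xs'" "k < length ys'" "\<forall>j<k. xs'!j = ys'!j" "xs'!k \<noteq> ys'!k" "r (xs'!k) (ys'!k)"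
    using h(5) unfolding LL_def by blast
  have ka: "k \<noteq> ?a"
  proof
    assume e: "k = ?a"
    then have "PRE r xs' ys'" using k l unfolding PRE_def by simp
    then show False using h by simp
  qed
  then have ka': "k < ?a" using k by simp
  have xk: "\<forall>j\<le>k. xs!j = xs'!j" using ax ka' by auto
  have c1: "k < length xs" using k l by simp
  have c2: "k < length ys" using k l by simp
  have c3: "\<forall>j<k. xs!j = ys!j" using xk k ay by auto
  have "xs!k \<noteq> ys!k \<and> r (xs!k) (ys!k)"
    proof (cases "k < ?b")
      case True then show ?thesis using xk ay k by simp
    next
      case False then have kb: "k = ?b" using k by simp
      have m: "xs'!k \<in> A" "ys'!k \<in> A" "ys!k \<in> A" using A k l inA by (metis order_less_le_trans)+
      have r1: "r (ys'!k) (ys!k)" using ay kb by simp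
      have "r (xs'!k) (ys!k)" using porderD(3)[OF A(1) m(1) m(2) m(3) k(5) r1] .
      moreover have "xs'!k \<noteq> ys!k"
      proof
        assume "xs'!k = ys!k"
        then have "ys'!k = xs'!k" using porderD(2)[OF A(1) m(2) m(1)] r1 k(5) by simp
        then show False using k by simp
      qed
      ultimately show ?thesis using xk by simp
    qed
  then show ?thesis unfolding LL_def using c1 c2 c3 by blast
qed

lemma lorder_sub: "lorder_on A r \<Longrightarrow> B \<subseteq> A \<Longrightarrow> lorder_on B r"
  unfolding lorder_on_def porder_on_def by blast

context fs begin

lemma meet_ex: assumes "x \<in> S" "y \<in> S" "r \<in> S" "le r x" "le r y"
  shows "\<exists>m. is_meet S le m x y"
proof -
  let ?C = "{u\<in>S. le u x \<and> le u y}"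
  have fin: "finite ?C" using finS by simp
  have ne: "?C \<noteq> {}" using assms by blast
  let ?n = "Max (ht S le ` ?C)"
  have "?n \<in> ht S le ` ?C" using fin ne by (intro Max_in) auto
  then obtain u where u': "?n = ht S le u" "u \<in> ?C" by (rule imageE)
  have u: "u \<in> ?C" "ht S le u = ?n" using u' by simp_all
  have mx: "\<And>u'. u' \<in> ?C \<Longrightarrow> ht S le u' \<le> ht S le u"
  proof -
    fix u' assume "u' \<in> ?C"
    then have "ht S le u' \<le> ?n" using fin by (intro Max_ge) auto
    then show "ht S le u' \<le> ht S le u" using u(2) by simp
  qed
  have "\<forall>u'\<in>S. le u' x \<and> le u' y \<longrightarrow> le u' u"
  proof (intro ballI impI)
    fix u' assume a: "u' \<in> S" "le u' x \<and> le u' y"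
    have "le u' u \<or> le u u'" using chain[OF assms(1) a(1), of u] a u by blast
    then show "le u' u"
    proof
      assume "le u u'"
      then have "u = u' \<or> ht S le u < ht S le u'" using ht_less[of u u'] u a by blast
      then show ?thesis
      proof
        assume "u = u'" then show ?thesis using frefl[of u] a by simp
      next
        assume "ht S le u < ht S le u'" then show ?thesis using mx[of u'] a by simp
      qed
    qed
  qed
  then show ?thesis unfolding is_meet_def using u by blast
qed

lemma succ_ex: assumes "m \<in> S" "x \<in> S" "le m x" "m \<noteq> x"
  shows "\<exists>v. imm_succ S le m v \<and> le v x"
proof -
  let ?D = "{u\<in>S. le m u \<and> u \<noteq> m \<and> le u x}"
  have fin: "finite ?D" using finS by simp
  have ne: "x \<in> ?D" using assms frefl[of x] by simp
  let ?n = "Min (ht S le ` ?D)"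
  have "?n \<in> ht S le ` ?D" using fin ne by (intro Min_in) auto
  then obtain u where u': "?n = ht S le u" "u \<in> ?D" by (rule imageE)
  have u: "u \<in> ?D" "ht S le u = ?n" using u' by simp_all
  have mn: "\<And>u'. u' \<in> ?D \<Longrightarrow> ht S le u \<le> ht S le u'"
  proof -
    fix u' assume "u' \<in> ?D"
    then have "?n \<le> ht S le u'" using fin by (intro Min_le) auto
    then show "ht S le u \<le> ht S le u'" using u(2) by simp
  qed
  have "imm_succ S le m u"
    unfolding imm_succ_def
  proof (intro conjI ballI impI)
    show "m \<in> S" using assms by simp
    show "u \<in> S" "le m u" "m \<noteq> u" using u(1) by auto
    fix w assume w: "w \<in> S" "le m w \<and> le w u"
    show "w = m \<or> w = u"
    proof (cases "w = m")
      case False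
      have "u \<in> S" "le u x" using u(1) by auto
      then have "le w x" using ftrans[of w u x] w assms by blast
      then have "w \<in> ?D" using w False by blast
      then have "ht S le u \<le> ht S le w" by (rule mn)
      moreover have "ht S le w \<le> ht S le u" using ht_mono[of w u] w \<open>u \<in> S\<close> by blast
      ultimately have "w = u" using ht_eq[of w u] w \<open>u \<in> S\<close> by simp
      then show ?thesis by simp
    qed simp
  qed
  moreover have "le u x" using u(1) by simp
  ultimately show ?thesis by blast
qed

end

lemma tree_lex_gen:
  assumes fo: "forest T R" and rt: "r \<in> T" "\<forall>x\<in>T. R r x"
    and lin: "lorder_on T M"
    and mono: "\<forall>x\<in>T. \<forall>y\<in>T. R x y \<longrightarrow> M x y"
    and blk: "\<forall>x'\<in>T. \<forall>x\<in>T. \<forall>y'\<in>T. \<forall>y\<in>T. R x' x \<and> R y' y \<and> \<not> R x' y' \<and> \<not> R y' x' \<and> M x' y' \<longrightarrow> M x y"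
    and xy: "x \<in> T" "y \<in> T"
  shows "M x y \<longleftrightarrow> tree_lex T R (\<lambda>_. M) x y"
proof -
  interpret fs T R by (rule fs.intro) (rule fo)
  have Manti: "\<And>a b. a \<in> T \<Longrightarrow> b \<in> T \<Longrightarrow> M a b \<Longrightarrow> M b a \<Longrightarrow> a = b"
    using lin unfolding lorder_on_def porder_on_def by blast
  have Mtot: "\<And>a b. a \<in> T \<Longrightarrow> b \<in> T \<Longrightarrow> M a b \<or> M b a"
    using lin unfolding lorder_on_def by blast
  have incomp: "\<not> R v' w' \<and> \<not> R w' v'"
    if m: "is_meet T R m x y" and v: "imm_succ T R m v'" "R v' x" and w: "imm_succ T R m w'" "R w' y" for m v' w'
  proof -
    have vw: "v' \<in> T" "w' \<in> T" "m \<in> T" "R m v'" "R m w'" "m \<noteq> v'" "m \<noteq> w'"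
      using v w unfolding imm_succ_def by auto
    have M: "\<forall>u\<in>T. R u x \<and> R u y \<longrightarrow> R u m" using m unfolding is_meet_def by blast
    show ?thesis
    proof (intro conjI notI)
      assume "R v' w'"
      then have "R v' y" using ftrans[of v' w' y] vw w xy by blast
      then have "R v' m" using M v vw by blast
      then show False using fantisym[of m v'] vw by simp
    next
      assume "R w' v'"
      then have "R w' x" using ftrans[of w' v' x] vw v xy by blast
      then have "R w' m" using M w vw by blast
      then show False using fantisym[of m w'] vw by simp
    qed
  qed
  show ?thesis
  proof
    assume "tree_lex T R (\<lambda>_. M) x y"
    then consider "R x y" | m v' w' where "\<not> R x y" "\<not> R y x" "is_meet T R m x y"
      "imm_succ T R m v'" "R v' x" "imm_succ T R m w'" "R w' y" "M v' w'"
      unfolding tree_lex_def by blast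
    then show "M x y"
    proof cases
      case 1 then show ?thesis using mono[rule_format, of x y] xy by blast
    next
      case (2 m v' w')
      have "v' \<in> T" "w' \<in> T" using 2 unfolding imm_succ_def by auto
      moreover have "\<not> R v' w' \<and> \<not> R w' v'" using incomp 2 by blast
      ultimately show ?thesis using blk[rule_format, of v' x w' y] xy 2 by blast
    qed
  next
    assume Mxy: "M x y"
    show "tree_lex T R (\<lambda>_. M) x y"
    proof (cases "R x y")
      case True then show ?thesis unfolding tree_lex_def by simp
    next
      case nxy: False
      show ?thesis
      proof (cases "R y x")
        case True
        then have "M y x" using mono[rule_format, of y x] xy by blast
        then have "x = y" using Manti xy Mxy by blast
        then show ?thesis using frefl xy nxy by simp
      next
        case nyx: False
        obtain m where m: "is_meet T R m x y" using meet_ex[OF xy rt(1)] rt xy by blast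
        have mT: "m \<in> T" "R m x" "R m y" using m unfolding is_meet_def by auto
        have "m \<noteq> x" using mT nxy by auto
        then obtain v' where v: "imm_succ T R m v'" "R v' x" using succ_ex[of m x] mT xy by blast
        have "m \<noteq> y" using mT nyx by auto
        then obtain w' where w: "imm_succ T R m w'" "R w' y" using succ_ex[of m y] mT xy by blast
        have vwT: "v' \<in> T" "w' \<in> T" using v w unfolding imm_succ_def by auto
        have ic: "\<not> R v' w' \<and> \<not> R w' v'" using incomp[OF m v w] .
        have "M v' w'"
        proof (rule ccontr)
          assume "\<not> M v' w'"
          then have "M w' v'" using Mtot vwT by blast
          then have "M y x" using blk[rule_format, of w' y v' x] xy vwT v w ic by blast
          then have "x = y" using Manti xy Mxy by blast
          then show False using frefl xy nxy by simp
        qed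
        then show ?thesis unfolding tree_lex_def using nxy nyx m v w by blast
      qed
    qed
  qed
qed

lemma oplus_le_simps[simp]:
  "oplus_le r None y" "\<not> oplus_le r (Some a) None" "oplus_le r (Some a) (Some b) = r a b"
  by (simp_all add: oplus_le_def)

lemma ball_oplus: "(\<forall>x\<in>oplus_carrier F. P x) \<longleftrightarrow> P None \<and> (\<forall>a\<in>F. P (Some a))"
  unfolding oplus_carrier_def by auto

lemma oplus_porder: "porder_on F r \<Longrightarrow> porder_on (oplus_carrier F) (oplus_le r)"
  unfolding porder_on_def by (simp only: ball_oplus oplus_le_simps simp_thms option.inject option.distinct) blast

lemma oplus_lorder: "lorder_on F r \<Longrightarrow> lorder_on (oplus_carrier F) (oplus_le r)"
proof -
  assume a: "lorder_on F r"
  have "porder_on (oplus_carrier F) (oplus_le r)" using a oplus_porder unfolding lorder_on_def by blast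
  moreover have "\<forall>x\<in>F. \<forall>y\<in>F. r x y \<or> r y x" using a unfolding lorder_on_def by blast
  ultimately show ?thesis unfolding lorder_on_def by (simp only: ball_oplus oplus_le_simps simp_thms option.inject option.distinct) blast
qed

lemma oplus_forest: "forest F r \<Longrightarrow> forest (oplus_carrier F) (oplus_le r)"
proof -
  assume f: "forest F r"
  have "finite (oplus_carrier F)" using f unfolding forest_def oplus_carrier_def by simp
  moreover have "porder_on (oplus_carrier F) (oplus_le r)" using f oplus_porder unfolding forest_def by blast
  moreover have "\<forall>s\<in>oplus_carrier F. \<forall>x\<in>oplus_carrier F. \<forall>y\<in>oplus_carrier F.
      oplus_le r x s \<and> oplus_le r y s \<longrightarrow> oplus_le r x y \<or> oplus_le r y x"
    using f unfolding forest_def by (simp only: ball_oplus oplus_le_simps simp_thms option.inject option.distinct) blast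
  ultimately show ?thesis unfolding forest_def by blast
qed

lemma ordered_forest_gen:
  assumes fo: "forest F le" and lin: "lorder_on F L"
    and mono: "\<forall>x\<in>F. \<forall>y\<in>F. le x y \<longrightarrow> L x y"
    and blk: "\<forall>x'\<in>F. \<forall>x\<in>F. \<forall>y'\<in>F. \<forall>y\<in>F. le x' x \<and> le y' y \<and> \<not> le x' y' \<and> \<not> le y' x' \<and> L x' y' \<longrightarrow> L x y"
  shows "ordered_forest F le L"
proof -
  let ?T = "oplus_carrier F" and ?R = "oplus_le le" and ?M = "oplus_le L"
  have fT: "forest ?T ?R" using oplus_forest[OF fo] .
  have rt: "None \<in> ?T" "\<forall>x\<in>?T. ?R None x" unfolding oplus_carrier_def by auto
  have lT: "lorder_on ?T ?M" using oplus_lorder[OF lin] .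
  have mT: "\<forall>x\<in>?T. \<forall>y\<in>?T. ?R x y \<longrightarrow> ?M x y" using mono unfolding ball_oplus by simp
  have bT: "\<forall>x'\<in>?T. \<forall>x\<in>?T. \<forall>y'\<in>?T. \<forall>y\<in>?T. ?R x' x \<and> ?R y' y \<and> \<not> ?R x' y' \<and> \<not> ?R y' x' \<and> ?M x' y' \<longrightarrow> ?M x y"
  proof (intro ballI impI)
    fix x' x y' y assume m: "x' \<in> ?T" "x \<in> ?T" "y' \<in> ?T" "y \<in> ?T"
      and H: "?R x' x \<and> ?R y' y \<and> \<not> ?R x' y' \<and> \<not> ?R y' x' \<and> ?M x' y'"
    obtain a' where a': "x' = Some a'" "a' \<in> F" using m H unfolding oplus_carrier_def by auto
    obtain b' where b': "y' = Some b'" "b' \<in> F" using m H unfolding oplus_carrier_def by auto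
    obtain a where a: "x = Some a" "a \<in> F" using m H a' unfolding oplus_carrier_def by auto
    obtain b where b: "y = Some b" "b \<in> F" using m H b' unfolding oplus_carrier_def by auto
    have "L a b" using blk[rule_format, of a' a b' b] a' b' a b H by simp
    then show "?M x y" using a b by simp
  qed
  have ot: "ordered_tree ?T ?R (\<lambda>_. ?M)"
    unfolding ordered_tree_def tree_def
  proof (intro conjI ballI)
    show "forest ?T ?R" by fact
    show "\<exists>r\<in>?T. \<forall>x\<in>?T. ?R r x" using rt by blast
    fix v assume "v \<in> ?T"
    show "lorder_on {w. imm_succ ?T ?R v w} ?M"
      by (rule lorder_sub[OF lT]) (auto simp: imm_succ_def)
  qed
  have eq: "\<forall>x\<in>F. \<forall>y\<in>F. L x y \<longleftrightarrow> tree_lex ?T ?R (\<lambda>_. ?M) (Some x) (Some y)"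
  proof (intro ballI)
    fix x y assume "x \<in> F" "y \<in> F"
    then have "Some x \<in> ?T" "Some y \<in> ?T" unfolding oplus_carrier_def by auto
    from tree_lex_gen[OF fT rt lT mT bT this] show "L x y \<longleftrightarrow> tree_lex ?T ?R (\<lambda>_. ?M) (Some x) (Some y)"
      by simp
  qed
  show ?thesis unfolding ordered_forest_def using fo lin ot eq by blast
qed

lemma concat_pairs: "concat (map (\<lambda>i. [f i, g i]) [0..<n]) =
   map (\<lambda>j. if even j then f (j div 2) else g (j div 2)) [0..<2*n]"
  by (induction n) auto

lemma take_eq_iff: "k \<le> length xs \<Longrightarrow> k \<le> length ys \<Longrightarrow> take k xs = take k ys \<longleftrightarrow> (\<forall>i<k. xs!i = ys!i)"
  by (auto simp: list_eq_iff_nth_eq)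

locale ft = fs +
  fixes I :: "'i set" and leI :: "'i \<Rightarrow> 'i \<Rightarrow> bool" and lo :: "'a \<Rightarrow> 'a \<Rightarrow> bool"
  assumes finI: "finite I" and linI: "lorder_on I leI" and linS: "lorder_on S lo"
begin

abbreviation "h \<equiv> ht S le"
abbreviation "X \<equiv> interleave S le"
abbreviation "A \<equiv> Inl ` S \<union> Inr ` I"
abbreviation "rr \<equiv> sum_le lo leI"

lemma memT: "(s, t) \<in> tensor S le I \<longleftrightarrow> s \<in> S \<and> set t \<subseteq> I \<and> length t \<le> forest_ht S le \<and> length t = h s"
  unfolding tensor_def by simp

lemma X_eq: "X (s, t) = map (\<lambda>j. if even j then Inl (pred_at S le s (j div 2)) else Inr (t ! (j div 2))) [0..<2 * h s]"
  unfolding interleave_def by (simp add: concat_pairs)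

lemma X_len: "length (X (s,t)) = 2 * h s" by (simp add: X_eq)

lemma X_nth: "j < 2 * h s \<Longrightarrow> X (s,t) ! j = (if even j then Inl (pred_at S le s (j div 2)) else Inr (t ! (j div 2)))"
  by (simp add: X_eq)

lemma X_even: "i < h s \<Longrightarrow> X (s,t) ! (2*i) = Inl (pred_at S le s i)"
  by (simp add: X_nth)

lemma X_odd: "i < h s \<Longrightarrow> X (s,t) ! (2*i+1) = Inr (t ! i)"
  by (subst X_nth) auto

lemma rr_porder: "porder_on A rr"
proof -
  have pS: "\<forall>x\<in>S. lo x x" "\<forall>x\<in>S. \<forall>y\<in>S. lo x y \<and> lo y x \<longrightarrow> x = y"
     "\<forall>x\<in>S. \<forall>y\<in>S. \<forall>z\<in>S. lo x y \<and> lo y z \<longrightarrow> lo x z" "\<forall>x\<in>S. \<forall>y\<in>S. lo x y \<or> lo y x"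
    using linS unfolding lorder_on_def porder_on_def by blast+
  have pI: "\<forall>x\<in>I. leI x x" "\<forall>x\<in>I. \<forall>y\<in>I. leI x y \<and> leI y x \<longrightarrow> x = y"
     "\<forall>x\<in>I. \<forall>y\<in>I. \<forall>z\<in>I. leI x y \<and> leI y z \<longrightarrow> leI x z" "\<forall>x\<in>I. \<forall>y\<in>I. leI x y \<or> leI y x"
    using linI unfolding lorder_on_def porder_on_def by blast+
  have r1: "\<forall>x\<in>A. rr x x" using pS(1) pI(1) by (auto simp: sum_le_def)
  have r2: "\<forall>x\<in>A. \<forall>y\<in>A. rr x y \<and> rr y x \<longrightarrow> x = y"
  proof (intro ballI impI)
    fix x y assume "x \<in> A" "y \<in> A" "rr x y \<and> rr y x"
    then show "x = y" using pS(2)[rule_format] pI(2)[rule_format] by (auto simp: sum_le_def)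
  qed
  have r3: "\<forall>x\<in>A. \<forall>y\<in>A. \<forall>z\<in>A. rr x y \<and> rr y z \<longrightarrow> rr x z"
  proof (intro ballI impI)
    fix x y z assume "x \<in> A" "y \<in> A" "z \<in> A" "rr x y \<and> rr y z"
    then show "rr x z"
      apply (cases x; cases y; cases z)
      apply (simp_all add: sum_le_def)
      using pS(3) pI(3) by blast+
  qed
  show ?thesis unfolding porder_on_def using r1 r2 r3 by blast
qed

lemma rr_Inl: "a \<in> S \<Longrightarrow> b \<in> S \<Longrightarrow> rr (Inl a) (Inl b) \<or> rr (Inl b) (Inl a)"
proof -
  assume "a \<in> S" "b \<in> S"
  then have "lo a b \<or> lo b a" using linS unfolding lorder_on_def by blast
  then show ?thesis by (simp add: sum_le_def)
qed
lemma rr_Inr: "a \<in> I \<Longrightarrow> b \<in> I \<Longrightarrow> rr (Inr a) (Inr b) \<or> rr (Inr b) (Inr a)"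
proof -
  assume "a \<in> I" "b \<in> I"
  then have "leI a b \<or> leI b a" using linI unfolding lorder_on_def by blast
  then show ?thesis by (simp add: sum_le_def)
qed

lemma h_pos: "(s,t) \<in> tensor S le I \<Longrightarrow> h s \<ge> 1" using ht_pos memT by blast

lemma X_ne: "(s,t) \<in> tensor S le I \<Longrightarrow> X (s,t) \<noteq> []"
proof -
  assume "(s,t) \<in> tensor S le I"
  then have "h s \<ge> 1" by (rule h_pos)
  then have "length (X (s,t)) \<noteq> 0" using X_len[of s t] by simp
  then show ?thesis by simp
qed

lemma X_set: assumes "(s,t) \<in> tensor S le I" shows "set (X (s,t)) \<subseteq> A"
proof
  fix a assume "a \<in> set (X (s,t))"
  then obtain j where j: "j < 2 * h s" "a = X (s,t) ! j" by (auto simp: in_set_conv_nth X_len)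
  have m: "s \<in> S" "set t \<subseteq> I" "length t = h s" using assms memT by auto
  show "a \<in> A"
  proof (cases "even j")
    case True
    then have "j div 2 < h s" using j by auto
    then have "pred_at S le s (j div 2) \<in> S" using pred_at(1) m by blast
    then show ?thesis using j True X_nth[OF j(1), of t] by simp
  next
    case False
    then have "j div 2 < h s" using j by auto
    then have "t ! (j div 2) \<in> I" using m by (metis nth_mem subsetD)
    then show ?thesis using j False X_nth[OF j(1), of t] by simp
  qed
qed

lemma split_idx: "(\<forall>j<2*(n::nat) - 1. P j) \<longleftrightarrow> (\<forall>i<n. P (2*i)) \<and> (\<forall>i<n - 1. P (2*i+1))"
proof
  assume a: "\<forall>j<2*n - 1. P j"
  show "(\<forall>i<n. P (2*i)) \<and> (\<forall>i<n - 1. P (2*i+1))"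
  proof (intro conjI allI impI)
    fix i assume "i < n" then show "P (2*i)" using a by simp
  next
    fix i assume "i < n - 1" then show "P (2*i+1)" using a by simp
  qed
next
  assume a: "(\<forall>i<n. P (2*i)) \<and> (\<forall>i<n - 1. P (2*i+1))"
  show "\<forall>j<2*n - 1. P j"
  proof (intro allI impI)
    fix j assume j: "j < 2*n - 1"
    show "P j"
    proof (cases "even j")
      case True then obtain i where "j = 2*i" by blast
      then show ?thesis using a j by simp
    next
      case False then obtain i where "j = 2*i+1" using oddE by blast
      then show ?thesis using a j by simp
    qed
  qed
qed

lemma X_agree:
  assumes "(s1,t1) \<in> tensor S le I" "(s2,t2) \<in> tensor S le I" "h s1 \<le> h s2"
  shows "(\<forall>j<2 * h s1 - 1. X (s1,t1) ! j = X (s2,t2) ! j) \<longleftrightarrow>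
     (\<forall>i<h s1. pred_at S le s1 i = pred_at S le s2 i) \<and> (\<forall>i<h s1 - 1. t1!i = t2!i)"
proof -
  have e: "\<forall>i<h s1. (X (s1,t1) ! (2*i) = X (s2,t2) ! (2*i)) = (pred_at S le s1 i = pred_at S le s2 i)"
  proof (intro allI impI)
    fix i assume i: "i < h s1"
    then have "i < h s2" using assms(3) by linarith
    then show "(X (s1,t1) ! (2*i) = X (s2,t2) ! (2*i)) = (pred_at S le s1 i = pred_at S le s2 i)"
      using X_even[OF i, of t1] X_even[of i s2 t2] by simp
  qed
  have o: "\<forall>i<h s1 - 1. (X (s1,t1) ! (2*i+1) = X (s2,t2) ! (2*i+1)) = (t1!i = t2!i)"
  proof (intro allI impI)
    fix i assume i: "i < h s1 - 1"
    then have "i < h s1" "i < h s2" using assms(3) by linarith+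
    then show "(X (s1,t1) ! (2*i+1) = X (s2,t2) ! (2*i+1)) = (t1!i = t2!i)"
      using X_odd[of i s1 t1] X_odd[of i s2 t2] by simp
  qed
  show ?thesis unfolding split_idx using e o by auto
qed

end

context ft begin

lemma X_last: "1 \<le> k \<Longrightarrow> k \<le> h s \<Longrightarrow> X (s,t) ! (2*k - 1) = Inr (t ! (k - 1))"
proof -
  assume a: "1 \<le> k" "k \<le> h s"
  then have "k - 1 < h s" by linarith
  moreover have "2*(k-1)+1 = 2*k - 1" using a by simp
  ultimately show ?thesis using X_odd[of "k-1" s t] by simp
qed

lemma TLE:
  assumes p: "(s1,t1) \<in> tensor S le I" and q: "(s2,t2) \<in> tensor S le I"
  shows "tensor_le S le leI (s1,t1) (s2,t2) \<longleftrightarrow> PRE rr (X (s1,t1)) (X (s2,t2))"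
proof -
  have m1: "s1 \<in> S" "set t1 \<subseteq> I" "length t1 = h s1" using p memT by auto
  have m2: "s2 \<in> S" "set t2 \<subseteq> I" "length t2 = h s2" using q memT by auto
  have h1: "h s1 \<ge> 1" using h_pos[OF p] .
  have h2: "h s2 \<ge> 1" using h_pos[OF q] .
  have lenX: "length (X (s1,t1)) - 1 = 2 * h s1 - 1" using X_len[of s1 t1] by simp
  show ?thesis
  proof
    assume "tensor_le S le leI (s1,t1) (s2,t2)"
    then have a: "le s1 s2" "take (h s1 - 1) t1 = take (h s1 - 1) t2" "leI (t1 ! (h s1 - 1)) (t2 ! (h s1 - 1))"
      unfolding tensor_le_def by auto
    have hh: "h s1 \<le> h s2" using ht_mono[OF m1(1) m2(1) a(1)] .
    have pa: "\<forall>i<h s1. pred_at S le s1 i = pred_at S le s2 i" using pred_at_mono[OF m1(1) m2(1) a(1)] by blast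
    have ta: "\<forall>i<h s1 - 1. t1!i = t2!i" using a(2) take_eq_iff[of "h s1 - 1" t1 t2] m1 m2 hh by simp
    have ag: "\<forall>j<2 * h s1 - 1. X (s1,t1) ! j = X (s2,t2) ! j" using X_agree[OF p q hh] pa ta by blast
    have "rr (X (s1,t1) ! (2 * h s1 - 1)) (X (s2,t2) ! (2 * h s1 - 1))"
      using X_last[OF h1, of s1 t1] X_last[OF h1 hh, of t2] a(3) by (simp add: sum_le_def)
    then show "PRE rr (X (s1,t1)) (X (s2,t2))" unfolding PRE_def
      using X_ne[OF p] X_len[of s1 t1] X_len[of s2 t2] hh ag lenX by simp
  next
    assume "PRE rr (X (s1,t1)) (X (s2,t2))"
    then have a: "2 * h s1 \<le> 2 * h s2" "\<forall>j<2 * h s1 - 1. X (s1,t1) ! j = X (s2,t2) ! j"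
       "rr (X (s1,t1) ! (2 * h s1 - 1)) (X (s2,t2) ! (2 * h s1 - 1))"
      unfolding PRE_def using X_len[of s1 t1] X_len[of s2 t2] lenX by auto
    have hh: "h s1 \<le> h s2" using a(1) by simp
    have pa: "\<forall>i<h s1. pred_at S le s1 i = pred_at S le s2 i" and ta: "\<forall>i<h s1 - 1. t1!i = t2!i"
      using X_agree[OF p q hh] a(2) by blast+
    have l: "le s1 s2" using pred_le[OF m1(1) m2(1) hh pa] .
    have tk: "take (h s1 - 1) t1 = take (h s1 - 1) t2" using take_eq_iff[of "h s1 - 1" t1 t2] m1 m2 hh ta by simp
    have "leI (t1 ! (h s1 - 1)) (t2 ! (h s1 - 1))"
      using X_last[OF h1, of s1 t1] X_last[OF h1 hh, of t2] a(3) by (simp add: sum_le_def)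
    then show "tensor_le S le leI (s1,t1) (s2,t2)" unfolding tensor_le_def using l tk by simp
  qed
qed

lemma X_inj:
  assumes p: "(s1,t1) \<in> tensor S le I" and q: "(s2,t2) \<in> tensor S le I" and e: "X (s1,t1) = X (s2,t2)"
  shows "(s1,t1) = (s2,t2)"
proof -
  have m1: "s1 \<in> S" "set t1 \<subseteq> I" "length t1 = h s1" using p memT by auto
  have m2: "s2 \<in> S" "set t2 \<subseteq> I" "length t2 = h s2" using q memT by auto
  have h1: "h s1 \<ge> 1" using h_pos[OF p] .
  have hh: "h s1 = h s2" using e X_len[of s1 t1] X_len[of s2 t2] by simp
  have pa: "\<forall>i<h s1. pred_at S le s1 i = pred_at S le s2 i" and ta: "\<forall>i<h s1 - 1. t1!i = t2!i"
    using X_agree[OF p q] hh e by auto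
  have "h s1 - 1 < h s1" using h1 by simp
  then have "pred_at S le s1 (h s1 - 1) = pred_at S le s2 (h s1 - 1)" using pa by blast
  then have "s1 = s2" using pred_at_last[OF m1(1)] pred_at_last[OF m2(1)] hh by simp
  moreover have "t1 ! (h s1 - 1) = t2 ! (h s1 - 1)"
    using X_last[OF h1, of s1 t1] X_last[OF h1, of s2 t2] hh e by simp
  then have "\<forall>i<h s1. t1!i = t2!i"
  proof (intro allI impI)
    fix i assume "t1 ! (h s1 - 1) = t2 ! (h s1 - 1)" "i < h s1"
    show "t1!i = t2!i"
    proof (cases "i < h s1 - 1")
      case True then show ?thesis using ta by simp
    next
      case False then have "i = h s1 - 1" using \<open>i < h s1\<close> by simp
      then show ?thesis using \<open>t1 ! (h s1 - 1) = t2 ! (h s1 - 1)\<close> by simp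
    qed
  qed
  then have "t1 = t2" using m1 m2 hh by (simp add: list_eq_iff_nth_eq)
  ultimately show ?thesis by simp
qed

lemma fin_tensor: "finite (tensor S le I)"
proof -
  have "tensor S le I \<subseteq> S \<times> {t. set t \<subseteq> I \<and> length t \<le> forest_ht S le}"
    unfolding tensor_def by auto
  moreover have "finite (S \<times> {t. set t \<subseteq> I \<and> length t \<le> forest_ht S le})"
    using finS finI finite_lists_length_le by blast
  ultimately show ?thesis by (rule finite_subset)
qed

lemma X_tot: assumes p: "(s1,t1) \<in> tensor S le I" and q: "(s2,t2) \<in> tensor S le I"
  shows "tot rr (X (s1,t1)) (X (s2,t2))"
  unfolding tot_def
proof (intro allI impI)
  fix j assume j1: "j < length (X (s1,t1))" and j2: "j < length (X (s2,t2))"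
  have m1: "s1 \<in> S" "set t1 \<subseteq> I" "length t1 = h s1" using p memT by auto
  have m2: "s2 \<in> S" "set t2 \<subseteq> I" "length t2 = h s2" using q memT by auto
  have j1': "j < 2 * h s1" using j1 X_len[of s1 t1] by simp
  have j2': "j < 2 * h s2" using j2 X_len[of s2 t2] by simp
  have d1: "j div 2 < h s1" and d2: "j div 2 < h s2" using j1' j2' by auto
  show "rr (X (s1,t1) ! j) (X (s2,t2) ! j) \<or> rr (X (s2,t2) ! j) (X (s1,t1) ! j)"
  proof (cases "even j")
    case True
    have "pred_at S le s1 (j div 2) \<in> S" "pred_at S le s2 (j div 2) \<in> S"
      using pred_at(1) m1 m2 d1 d2 by blast+
    then show ?thesis using X_nth[OF j1', of t1] X_nth[OF j2', of t2] True rr_Inl by simp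
  next
    case False
    have "t1 ! (j div 2) \<in> I" "t2 ! (j div 2) \<in> I" using m1 m2 d1 d2 by (metis nth_mem subsetD)+
    then show ?thesis using X_nth[OF j1', of t1] X_nth[OF j2', of t2] False rr_Inr by simp
  qed
qed

end

context ft begin

lemma pall: "(\<And>s t. p = (s,t) \<Longrightarrow> P) \<Longrightarrow> P" by (cases p) auto

lemma TLE': "p \<in> tensor S le I \<Longrightarrow> q \<in> tensor S le I \<Longrightarrow> tensor_le S le leI p q \<longleftrightarrow> PRE rr (X p) (X q)"
  using TLE by (cases p, cases q) blast
lemma X_ne': "p \<in> tensor S le I \<Longrightarrow> X p \<noteq> []" using X_ne by (cases p) blast
lemma X_set': "p \<in> tensor S le I \<Longrightarrow> set (X p) \<subseteq> A" using X_set by (cases p) blast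
lemma X_inj': "p \<in> tensor S le I \<Longrightarrow> q \<in> tensor S le I \<Longrightarrow> X p = X q \<Longrightarrow> p = q"
  using X_inj by (cases p, cases q) blast
lemma X_tot': "p \<in> tensor S le I \<Longrightarrow> q \<in> tensor S le I \<Longrightarrow> tot rr (X p) (X q)"
  using X_tot by (cases p, cases q) blast
lemma LO': "tensor_lo S le lo leI p q = LL rr (X p) (X q)"
  unfolding tensor_lo_def list_lex_le_LL ..

lemma main:
  "forest (tensor S le I) (tensor_le S le leI) \<and>
   ordered_forest (tensor S le I) (tensor_le S le leI) (tensor_lo S le lo leI)"
proof -
  let ?T = "tensor S le I" and ?R = "tensor_le S le leI" and ?L = "tensor_lo S le lo leI"
  have por: "porder_on ?T ?R" unfolding porder_on_def
  proof (intro conjI ballI impI)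
    fix x assume x: "x \<in> ?T"
    show "?R x x" using TLE'[OF x x] PRE_refl[OF rr_porder X_set'[OF x] X_ne'[OF x]] by simp
  next
    fix x y assume x: "x \<in> ?T" and y: "y \<in> ?T" and h: "?R x y \<and> ?R y x"
    have "X x = X y" using PRE_antisym[OF rr_porder X_set'[OF x] X_set'[OF y]] TLE'[OF x y] TLE'[OF y x] h by blast
    then show "x = y" using X_inj'[OF x y] by simp
  next
    fix x y z assume x: "x \<in> ?T" and y: "y \<in> ?T" and z: "z \<in> ?T" and h: "?R x y \<and> ?R y z"
    show "?R x z" using PRE_trans[OF rr_porder X_set'[OF x] X_set'[OF y] X_set'[OF z]] TLE'[OF x y] TLE'[OF y z] TLE'[OF x z] h by blast
  qed
  have ch: "\<forall>s\<in>?T. \<forall>x\<in>?T. \<forall>y\<in>?T. ?R x s \<and> ?R y s \<longrightarrow> ?R x y \<or> ?R y x"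
  proof (intro ballI impI)
    fix s x y assume s: "s \<in> ?T" and x: "x \<in> ?T" and y: "y \<in> ?T" and h: "?R x s \<and> ?R y s"
    show "?R x y \<or> ?R y x" using PRE_chain[OF X_tot'[OF x y]] TLE'[OF x s] TLE'[OF y s] TLE'[OF x y] TLE'[OF y x] h by blast
  qed
  have fo: "forest ?T ?R" unfolding forest_def using fin_tensor por ch by blast
  have lin: "lorder_on ?T ?L" unfolding lorder_on_def porder_on_def LO'
  proof (intro conjI ballI impI)
    fix x assume x: "x \<in> ?T" show "LL rr (X x) (X x)" by (rule LL_refl)
  next
    fix x y assume x: "x \<in> ?T" and y: "y \<in> ?T" and h: "LL rr (X x) (X y) \<and> LL rr (X y) (X x)"
    have "X x = X y" using LL_antisym[OF rr_porder X_set'[OF x] X_set'[OF y]] h by blast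
    then show "x = y" using X_inj'[OF x y] by simp
  next
    fix x y z assume x: "x \<in> ?T" and y: "y \<in> ?T" and z: "z \<in> ?T" and h: "LL rr (X x) (X y) \<and> LL rr (X y) (X z)"
    show "LL rr (X x) (X z)" using LL_trans[OF rr_porder X_set'[OF x] X_set'[OF y] X_set'[OF z]] h by blast
  next
    fix x y assume x: "x \<in> ?T" and y: "y \<in> ?T"
    show "LL rr (X x) (X y) \<or> LL rr (X y) (X x)" using LL_total[OF X_tot'[OF x y]] .
  qed
  have mono: "\<forall>x\<in>?T. \<forall>y\<in>?T. ?R x y \<longrightarrow> ?L x y"
    using TLE' PRE_LL unfolding LO' by blast
  have blk: "\<forall>x'\<in>?T. \<forall>x\<in>?T. \<forall>y'\<in>?T. \<forall>y\<in>?T. ?R x' x \<and> ?R y' y \<and> \<not> ?R x' y' \<and> \<not> ?R y' x' \<and> ?L x' y' \<longrightarrow> ?L x y"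
  proof (intro ballI impI)
    fix x' x y' y assume m: "x' \<in> ?T" "x \<in> ?T" "y' \<in> ?T" "y \<in> ?T"
      and h: "?R x' x \<and> ?R y' y \<and> \<not> ?R x' y' \<and> \<not> ?R y' x' \<and> ?L x' y'"
    have "LL rr (X x) (X y)"
      using PRE_block[OF rr_porder X_set'[OF m(2)] X_set'[OF m(4)] X_set'[OF m(1)] X_set'[OF m(3)]]
        TLE'[OF m(1) m(2)] TLE'[OF m(3) m(4)] TLE'[OF m(1) m(3)] TLE'[OF m(3) m(1)] h unfolding LO' by blast
    then show "?L x y" unfolding LO' .
  qed
  show ?thesis using fo ordered_forest_gen[OF fo lin mono blk] by blast
qed

end

theorem lemma4p11:
  fixes S :: "'a set" and le lo :: "'a \<Rightarrow> 'a \<Rightarrow> bool"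
    and I :: "'i set" and leI :: "'i \<Rightarrow> 'i \<Rightarrow> bool"
  assumes "ordered_forest S le lo"
    and "finite I" and "lorder_on I leI"
  shows "forest (tensor S le I) (tensor_le S le leI) \<and>
         ordered_forest (tensor S le I) (tensor_le S le leI) (tensor_lo S le lo leI)"
proof -
  have f: "forest S le" and l: "lorder_on S lo" using assms(1) unfolding ordered_forest_def by blast+
  interpret ft S le I leI lo
    by (intro ft.intro fs.intro ft_axioms.intro f assms(2) assms(3) l)
  show ?thesis by (rule main)
qed

end
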